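(* Let $\sigma$ be the softmax-1 activation, take $m=0$, $r=0$ and unspecialized biases $b=\tilde b\mathbf 1_H$ with $\tilde b\in\mathbb R$. Then for every $h\in[H]$, $$\partial_{b_h}\tilde{\mathcal E}_\sigma(0,0,b,v)=-2\Big(\frac{Lv}{L+e^{\tilde b}}-1\Big)\frac vH\frac{e^{\tilde b}}{(L+e^{\tilde b})^2},\qquad \partial_v\tilde{\mathcal E}_\sigma(0,0,b,v)=2\Big(\frac{Lv}{L+e^{\tilde b}}-1\Big)\frac1{L+e^{\tilde b}}.$$ The fixed points of the corresponding gradient-flow system satisfy $Lv=L+e^{\tilde b}$ and they are attractive. Finally, at initialization $b=0$, $v=1$: $\partial_{b_h}\tilde{\mathcal E}_\sigma(0,0,0,1)>0$ and $\partial_v\tilde{\mathcal E}_\sigma(0,0,0,1)<0$.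
   Context: Fix integers $L,H,F\ge1$ and a distribution $P_\theta$ on $\mathbb R^F$; $\mathbf 1_H$ is the all-ones vector. For $m\in\mathbb R^{H\times F}$, $r$ symmetric $H\times H$, $b\in\mathbb R^H$, $v\in\mathbb R$: $\tilde{\mathcal E}_\sigma(m,r,b,v)=\mathbb E\big[\sum_{\ell=1}^L(\delta_{\ell,\epsilon}-\frac1H\sum_{h=1}^H\sigma(\chi,b,v;h)_\ell)^2\big]$, $\chi_{h\ell}=\sum_fm_{hf}\chi^*_{f\ell}+\sum_{h'}r_{hh'}\xi_{h'\ell}$, with $\epsilon\sim\mathrm{Unif}(\{1,\dots,L\})$, $\theta\sim P_\theta$, and conditionally independent $\chi^*_{:\ell}\sim\mathcal N(\delta_{\ell,\epsilon}\theta,I_F)$, $\xi_{:\ell}\sim\mathcal N(0,I_H)$. The softmax-1 activation is $\sigma(\chi,b,v;h)_\ell=v e^{\chi_{h\ell}}/(e^{b_h}+\sum_{\ell'=1}^Le^{\chi_{h\ell'}})$. The gradient flow is $\partial_\tau b=-\nabla_b\tilde{\mathcal E}_\sigma$, $\partial_\tau v=-\nabla_v\tilde{\mathcal E}_\sigma$. *)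

theory Defs
  imports "HOL-Probability.Probability"
begin

text \<open>Index conventions: heads h in {1..H}, features f in {1..F}, positions l in {1..L}.
  Matrices are functions nat => nat => real (only the entries with indices in range matter);
  random matrices chi* (F x L) and xi (H x L) are functions on index pairs.\<close>

definition gauss1 :: "real \<Rightarrow> real measure" where
  "gauss1 \<mu> = density lborel (normal_density \<mu> 1)"

definition chi_mat :: "nat \<Rightarrow> nat \<Rightarrow> (nat \<Rightarrow> nat \<Rightarrow> real) \<Rightarrow> (nat \<Rightarrow> nat \<Rightarrow> real)
    \<Rightarrow> (nat \<times> nat \<Rightarrow> real) \<Rightarrow> (nat \<times> nat \<Rightarrow> real) \<Rightarrow> nat \<Rightarrow> nat \<Rightarrow> real" where
  "chi_mat F H m r cs xi h l =
     (\<Sum>f=1..F. m h f * cs (f, l)) + (\<Sum>h'=1..H. r h h' * xi (h', l))"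

definition softmax1 :: "nat \<Rightarrow> (nat \<Rightarrow> nat \<Rightarrow> real) \<Rightarrow> (nat \<Rightarrow> real) \<Rightarrow> real \<Rightarrow> nat \<Rightarrow> nat \<Rightarrow> real" where
  "softmax1 L chi b v h l = v * exp (chi h l) / (exp (b h) + (\<Sum>l'=1..L. exp (chi h l')))"

definition sq_loss :: "nat \<Rightarrow> nat \<Rightarrow> nat \<Rightarrow> (nat \<Rightarrow> nat \<Rightarrow> real) \<Rightarrow> real" where
  "sq_loss L H eps out =
     (\<Sum>l=1..L. ((if l = eps then 1 else 0) - (1 / real H) * (\<Sum>h=1..H. out h l))\<^sup>2)"

text \<open>The population loss: eps uniform on {1..L}, theta ~ Ptheta, then chi* with independent
  N(delta_{l,eps} theta_f, 1) entries and xi with independent N(0,1) entries.\<close>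
definition Etilde :: "nat \<Rightarrow> nat \<Rightarrow> nat \<Rightarrow> (nat \<Rightarrow> real) measure \<Rightarrow> (nat \<Rightarrow> nat \<Rightarrow> real)
    \<Rightarrow> (nat \<Rightarrow> nat \<Rightarrow> real) \<Rightarrow> (nat \<Rightarrow> real) \<Rightarrow> real \<Rightarrow> real" where
  "Etilde L H F P m r b v =
     (1 / real L) * (\<Sum>eps=1..L.
        integral\<^sup>L P (\<lambda>\<theta>.
          integral\<^sup>L (PiM ({1..F} \<times> {1..L}) (\<lambda>(f, l). gauss1 (if l = eps then \<theta> f else 0))) (\<lambda>cs.
            integral\<^sup>L (PiM ({1..H} \<times> {1..L}) (\<lambda>_. gauss1 0)) (\<lambda>xi.
              sq_loss L H eps (softmax1 L (chi_mat F H m r cs xi) b v)))))"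

definition E0 :: "nat \<Rightarrow> nat \<Rightarrow> nat \<Rightarrow> (nat \<Rightarrow> real) measure \<Rightarrow> (nat \<Rightarrow> real) \<Rightarrow> real \<Rightarrow> real" where
  "E0 L H F P b v = Etilde L H F P (\<lambda>_ _. 0) (\<lambda>_ _. 0) b v"

definition pd_b :: "nat \<Rightarrow> nat \<Rightarrow> nat \<Rightarrow> (nat \<Rightarrow> real) measure \<Rightarrow> nat \<Rightarrow> (nat \<Rightarrow> real) \<Rightarrow> real \<Rightarrow> real" where
  "pd_b L H F P h b v = deriv (\<lambda>t. E0 L H F P (b(h := t)) v) (b h)"

definition pd_v :: "nat \<Rightarrow> nat \<Rightarrow> nat \<Rightarrow> (nat \<Rightarrow> real) measure \<Rightarrow> (nat \<Rightarrow> real) \<Rightarrow> real \<Rightarrow> real" where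
  "pd_v L H F P b v = deriv (\<lambda>w. E0 L H F P b w) v"

text \<open>Gradient flow restricted to unspecialized biases b = bt * 1_H:
  d bt/dtau = - d_{b_1} E, d v/dtau = - d_v E (all d_{b_h} coincide on this set).\<close>
definition rfixed :: "nat \<Rightarrow> nat \<Rightarrow> nat \<Rightarrow> (nat \<Rightarrow> real) measure \<Rightarrow> real \<Rightarrow> real \<Rightarrow> bool" where
  "rfixed L H F P bt v \<longleftrightarrow> pd_b L H F P 1 (\<lambda>_. bt) v = 0 \<and> pd_v L H F P (\<lambda>_. bt) v = 0"

definition rsolution :: "nat \<Rightarrow> nat \<Rightarrow> nat \<Rightarrow> (nat \<Rightarrow> real) measure \<Rightarrow> (real \<Rightarrow> real) \<Rightarrow> (real \<Rightarrow> real) \<Rightarrow> bool" where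
  "rsolution L H F P B V \<longleftrightarrow>
     (\<forall>\<tau>\<ge>0. (B has_real_derivative - pd_b L H F P 1 (\<lambda>_. B \<tau>) (V \<tau>)) (at \<tau> within {0..})
          \<and> (V has_real_derivative - pd_v L H F P (\<lambda>_. B \<tau>) (V \<tau>)) (at \<tau> within {0..}))"

text \<open>Attractive fixed point (the fixed points form a curve, so attraction is to the set
  of fixed points): every forward trajectory starting close enough converges to a fixed point.\<close>
definition rattractive :: "nat \<Rightarrow> nat \<Rightarrow> nat \<Rightarrow> (nat \<Rightarrow> real) measure \<Rightarrow> real \<Rightarrow> real \<Rightarrow> bool" where
  "rattractive L H F P bt v \<longleftrightarrow>
     (\<exists>e>0. \<forall>B V. rsolution L H F P B V \<and> dist (B 0, V 0) (bt, v) < e \<longrightarrow>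
        (\<exists>b_lim v_lim. rfixed L H F P b_lim v_lim \<and> (B \<longlongrightarrow> b_lim) at_top \<and> (V \<longlongrightarrow> v_lim) at_top))"

end

theory Submission
  imports Defs
begin


definition Af :: "nat \<Rightarrow> nat \<Rightarrow> (nat \<Rightarrow> real) \<Rightarrow> real \<Rightarrow> real" where
  "Af L H b v = (1 / real H) * (\<Sum>h=1..H. v / (exp (b h) + real L))"

lemma sq_loss_const:
  assumes "eps \<in> {1..L}"
  shows "sq_loss L H eps (\<lambda>h l. c h) = 1 - 2 * ((1 / real H) * (\<Sum>h=1..H. c h)) + real L * ((1 / real H) * (\<Sum>h=1..H. c h))\<^sup>2"
proof -
  define A where "A = (1 / real H) * (\<Sum>h=1..H. c h)"
  have "sq_loss L H eps (\<lambda>h l. c h) = (\<Sum>l=1..L. A\<^sup>2 + (if l = eps then 1 - 2 * A else 0))"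
    unfolding sq_loss_def A_def[symmetric] by (intro sum.cong) (auto simp: power2_eq_square algebra_simps)
  also have "\<dots> = real L * A\<^sup>2 + (1 - 2 * A)"
    using assms by (simp add: sum.distrib)
  finally show ?thesis unfolding A_def by simp
qed

lemma gauss_prob: "prob_space (gauss1 m)"
  unfolding gauss1_def by (rule prob_space_normal_density) simp

lemma E0_closed:
  assumes "L \<ge> 1" "prob_space P"
  shows "E0 L H F P b v = 1 - 2 * Af L H b v + real L * (Af L H b v)\<^sup>2"
proof -
  have sm: "softmax1 L (chi_mat F H (\<lambda>_ _. 0) (\<lambda>_ _. 0) cs xi) b v = (\<lambda>h l. v / (exp (b h) + real L))" for cs xi
    by (auto simp: softmax1_def chi_mat_def fun_eq_iff)
  have p1: "prob_space (PiM ({1..F} \<times> {1..L}) (\<lambda>(f, l). gauss1 (if l = eps then \<theta> f else 0)))" for eps \<theta>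
    by (rule prob_space_PiM) (auto simp: gauss_prob split: prod.splits)
  have p2: "prob_space (PiM ({1..H} \<times> {1..L}) (\<lambda>_. gauss1 0))"
    by (rule prob_space_PiM) (auto simp: gauss_prob)
  have i2: "integral\<^sup>L (PiM ({1..H} \<times> {1..L}) (\<lambda>_. gauss1 0)) (\<lambda>xi. c) = c" for c :: real
    using prob_space.prob_space[OF p2] by simp
  have i1: "integral\<^sup>L (PiM ({1..F} \<times> {1..L}) (\<lambda>(f, l). gauss1 (if l = eps then \<theta> f else 0))) (\<lambda>xi. c) = c" for c :: real and eps \<theta>
    using prob_space.prob_space[OF p1] by simp
  have iP: "integral\<^sup>L P (\<lambda>xi. c) = c" for c :: real
    using prob_space.prob_space[OF assms(2)] by simp
  have "E0 L H F P b v = (1 / real L) * (\<Sum>eps=1..L. 1 - 2 * Af L H b v + real L * (Af L H b v)\<^sup>2)"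
    unfolding E0_def Etilde_def sm i1 i2 iP
    apply (intro arg_cong[where f="\<lambda>x. (1 / real L) * x"] sum.cong refl)
    apply (subst sq_loss_const, simp)
    apply (simp add: Af_def)
    done
  also have "\<dots> = 1 - 2 * Af L H b v + real L * (Af L H b v)\<^sup>2" using assms(1) by simp
  finally show ?thesis .
qed

lemma Af_upd:
  assumes "h \<in> {1..H}"
  shows "Af L H ((\<lambda>_. bt)(h := t)) v = ((real H - 1) * (v / (exp bt + real L)) + v / (exp t + real L)) / real H"
proof -
  have "(\<Sum>h'=1..H. v / (exp (((\<lambda>_. bt)(h := t)) h') + real L))
       = v / (exp t + real L) + (\<Sum>h'\<in>{1..H} - {h}. v / (exp (((\<lambda>_. bt)(h := t)) h') + real L))"
    using assms by (subst sum.remove[of _ h]) auto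
  also have "(\<Sum>h'\<in>{1..H} - {h}. v / (exp (((\<lambda>_. bt)(h := t)) h') + real L))
     = (\<Sum>h'\<in>{1..H} - {h}. v / (exp bt + real L))" by (intro sum.cong) auto
  also have "\<dots> = (real H - 1) * (v / (exp bt + real L))"
    using assms by (simp add: of_nat_diff)
  finally show ?thesis unfolding Af_def by (simp add: field_simps)
qed

lemma Af_const:
  assumes "H \<ge> 1"
  shows "Af L H (\<lambda>_. bt) v = v / (real L + exp bt)"
  using assms unfolding Af_def by (simp add: add.commute)

lemma algB: "- 2 * ((- (v::real) * e / u\<^sup>2) / Hr) + Lr * (2 * (v / u) * ((- v * e / u\<^sup>2) / Hr))
   = - 2 * (Lr * v / u - 1) * (v / Hr) * (e / u\<^sup>2)"
  by (simp add: algebra_simps power2_eq_square)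

lemma derivB:
  assumes "L \<ge> 1" "H \<ge> 1" "prob_space P" "h \<in> {1..H}"
  shows "((\<lambda>t. E0 L H F P ((\<lambda>_. bt)(h := t)) v) has_real_derivative
               (- 2 * (real L * v / (real L + exp bt) - 1) * (v / real H)
                  * (exp bt / (real L + exp bt)\<^sup>2))) (at bt)"
proof -
  define c where "c = (real H - 1) * (v / (exp bt + real L))"
  have eq: "(\<lambda>t. E0 L H F P ((\<lambda>_. bt)(h := t)) v) = (\<lambda>t. 1 - 2 * ((c + v / (exp t + real L)) / real H)
        + real L * ((c + v / (exp t + real L)) / real H)\<^sup>2)"
    using assms by (simp add: E0_closed Af_upd c_def)
  have pos: "exp t + real L > 0" for t by (simp add: add_pos_nonneg)
  define G where "G = (\<lambda>t. (c + v / (exp t + real L)) / real H)"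
  define G' where "G' = (- v * exp bt / (exp bt + real L)\<^sup>2) / real H"
  have dG: "(G has_real_derivative G') (at bt)"
    unfolding G_def G'_def
    by (rule derivative_eq_intros refl | simp add: pos[THEN less_imp_neq, symmetric] pos[THEN less_imp_neq])+
       (use assms(2) pos[of bt] in \<open>simp_all add: divide_simps power2_eq_square\<close>)
  have dE: "((\<lambda>t. 1 - 2 * G t + real L * (G t)\<^sup>2) has_real_derivative (- 2 * G' + real L * (2 * G bt * G'))) (at bt)"
    by (rule derivative_eq_intros dG refl | simp)+
  have Gbt: "G bt = v / (real L + exp bt)"
    using assms(2) pos[of bt] unfolding G_def c_def
    by (simp add: divide_simps add.commute) (simp add: algebra_simps)
  have eq2: "(\<lambda>t. E0 L H F P ((\<lambda>_. bt)(h := t)) v) = (\<lambda>t. 1 - 2 * G t + real L * (G t)\<^sup>2)"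
    unfolding eq G_def ..
  show ?thesis unfolding eq2
    apply (rule DERIV_cong[OF dE])
    unfolding Gbt G'_def add.commute[of "exp bt" "real L"] by (rule algB)
qed


lemma mono_deriv:
  fixes f f' :: "real \<Rightarrow> real"
  assumes "0 \<le> a" "a \<le> b"
    and d: "\<And>\<tau>. a \<le> \<tau> \<Longrightarrow> \<tau> \<le> b \<Longrightarrow> (f has_real_derivative f' \<tau>) (at \<tau> within {0..})"
    and n: "\<And>\<tau>. a \<le> \<tau> \<Longrightarrow> \<tau> \<le> b \<Longrightarrow> f' \<tau> \<ge> 0"
  shows "f a \<le> f b"
proof (rule DERIV_nonneg_imp_increasing_open[OF assms(2)])
  fix x assume x: "a < x" "x < b"
  then have "x \<in> interior {0..}" using assms(1) interior_Ici[of "-1" "0::real"] by auto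
  then have "at x within {0..} = at x" by (rule at_within_interior)
  then show "\<exists>y. DERIV f x :> y \<and> y \<ge> 0" using d[of x] n[of x] x by auto
next
  show "continuous_on {a..b} f"
    unfolding continuous_on_eq_continuous_within
  proof
    fix x assume x: "x \<in> {a..b}"
    have "continuous (at x within {0..}) f" using d[of x] x by (auto intro: DERIV_continuous)
    then show "continuous (at x within {a..b}) f"
      by (rule continuous_within_subset) (use assms(1) in auto)
  qed
qed

lemma mono_deriv':
  fixes f f' :: "real \<Rightarrow> real"
  assumes "0 \<le> a" "a \<le> b"
    and d: "\<And>\<tau>. a \<le> \<tau> \<Longrightarrow> \<tau> \<le> b \<Longrightarrow> (f has_real_derivative f' \<tau>) (at \<tau> within {0..})"
    and n: "\<And>\<tau>. a \<le> \<tau> \<Longrightarrow> \<tau> \<le> b \<Longrightarrow> f' \<tau> \<le> 0"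
  shows "f b \<le> f a"
proof -
  have "- f a \<le> - f b"
    by (rule mono_deriv[where f' = "\<lambda>\<tau>. - f' \<tau>", OF assms(1,2)])
       (auto intro!: derivative_eq_intros d n)
  then show ?thesis by simp
qed

lemma mono_conv:
  fixes f :: "real \<Rightarrow> real"
  assumes m: "\<And>s t. 0 \<le> s \<Longrightarrow> s \<le> t \<Longrightarrow> f s \<le> f t" and b: "\<And>t. 0 \<le> t \<Longrightarrow> f t \<le> M"
  shows "\<exists>l. (f \<longlongrightarrow> l) at_top"
proof
  let ?l = "Sup (f ` {0..})"
  have bdd: "bdd_above (f ` {0..})" using b by (auto intro!: bdd_aboveI)
  show "(f \<longlongrightarrow> ?l) at_top"
  proof (rule increasing_tendsto)
    show "\<forall>\<^sub>F n in at_top. f n \<le> ?l"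
      using eventually_ge_at_top[of "0::real"]
      by eventually_elim (use bdd in \<open>auto intro!: cSUP_upper\<close>)
  next
    fix x assume "x < ?l"
    then obtain t where t: "t \<ge> 0" "x < f t"
      using less_cSUP_iff[OF _ bdd, of x] by auto
    show "\<forall>\<^sub>F n in at_top. x < f n"
      using eventually_ge_at_top[of t]
      by eventually_elim (use t m in \<open>force\<close>)
  qed
qed

lemma mono_conv':
  fixes f :: "real \<Rightarrow> real"
  assumes m: "\<And>s t. 0 \<le> s \<Longrightarrow> s \<le> t \<Longrightarrow> f t \<le> f s" and b: "\<And>t. 0 \<le> t \<Longrightarrow> M \<le> f t"
  shows "\<exists>l. (f \<longlongrightarrow> l) at_top"
proof -
  obtain l where "((\<lambda>t. - f t) \<longlongrightarrow> l) at_top"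
    using mono_conv[of "\<lambda>t. - f t" "- M"] m b by force
  then have "((\<lambda>t. - (- f t)) \<longlongrightarrow> - l) at_top" by (intro tendsto_intros)
  then show ?thesis by auto
qed


lemma cont_from_deriv:
  fixes f f' :: "real \<Rightarrow> real"
  assumes d: "\<And>\<tau>. 0 \<le> \<tau> \<Longrightarrow> (f has_real_derivative f' \<tau>) (at \<tau> within {0..})" and "0 \<le> a"
  shows "continuous_on {a..b} f"
  unfolding continuous_on_eq_continuous_within
proof
  fix x assume x: "x \<in> {a..b}"
  have "continuous (at x within {0..}) f" using d[of x] x assms(2) by (auto intro: DERIV_continuous)
  then show "continuous (at x within {a..b}) f"
    by (rule continuous_within_subset) (use assms(2) in auto)
qed

lemma algW:
  fixes G W e U Hh M :: real
  assumes "U \<noteq> 0" "Hh \<noteq> 0"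
  shows "2 * G * (W / Hh) * (e / U\<^sup>2) + M / Hh * (- 2 * G / U) = (2 * G / (Hh * U)) * (W * e / U - M)"
  using assms by (simp add: field_simps power2_eq_square)

lemma ode_conv:
  fixes B V g :: "real \<Rightarrow> real" and L H :: real
  assumes L: "L > 0" and H: "H > 0"
    and g: "\<And>\<tau>. g \<tau> = L * V \<tau> / (L + exp (B \<tau>)) - 1"
    and dB: "\<And>\<tau>. \<tau> \<ge> 0 \<Longrightarrow> (B has_real_derivative 2 * g \<tau> * (V \<tau> / H) * (exp (B \<tau>) / (L + exp (B \<tau>))\<^sup>2)) (at \<tau> within {0..})"
    and dV: "\<And>\<tau>. \<tau> \<ge> 0 \<Longrightarrow> (V has_real_derivative - 2 * g \<tau> / (L + exp (B \<tau>))) (at \<tau> within {0..})"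
    and V0: "V 0 > 0"
  shows "\<exists>bl vl. L * vl = L + exp bl \<and> (B \<longlongrightarrow> bl) at_top \<and> (V \<longlongrightarrow> vl) at_top"
proof -
  define u where "u \<tau> = L + exp (B \<tau>)" for \<tau>
  have upos: "u \<tau> > 0" for \<tau> using L by (simp add: u_def add_pos_pos)
  define Bd where "Bd \<tau> = 2 * g \<tau> * (V \<tau> / H) * (exp (B \<tau>) / (u \<tau>)\<^sup>2)" for \<tau>
  define Vd where "Vd \<tau> = - 2 * g \<tau> / u \<tau>" for \<tau>
  have dB': "(B has_real_derivative Bd \<tau>) (at \<tau> within {0..})" if "\<tau> \<ge> 0" for \<tau>
    using dB[OF that] unfolding Bd_def u_def .
  have dV': "(V has_real_derivative Vd \<tau>) (at \<tau> within {0..})" if "\<tau> \<ge> 0" for \<tau>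
    using dV[OF that] unfolding Vd_def u_def .
  define gd where "gd \<tau> = (L * Vd \<tau> * u \<tau> - L * V \<tau> * (exp (B \<tau>) * Bd \<tau>)) / (u \<tau> * u \<tau>)" for \<tau>
  have geq: "g = (\<lambda>\<tau>. L * V \<tau> / u \<tau> - 1)" using g unfolding u_def by auto
  have dg: "(g has_real_derivative gd \<tau>) (at \<tau> within {0..})" if "\<tau> \<ge> 0" for \<tau>
  proof -
    have du: "(u has_real_derivative exp (B \<tau>) * Bd \<tau>) (at \<tau> within {0..})"
      unfolding u_def[abs_def] by (auto intro!: derivative_eq_intros dB'[OF that])
    have dLV: "((\<lambda>x. L * V x) has_real_derivative L * Vd \<tau>) (at \<tau> within {0..})"
      by (auto intro!: derivative_eq_intros dV'[OF that])
    have "((\<lambda>x. L * V x / u x - 1) has_real_derivative gd \<tau> - 0) (at \<tau> within {0..})"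
      unfolding gd_def
      by (intro DERIV_diff DERIV_divide[OF dLV du] DERIV_const) (use upos[of \<tau>] in auto)
    then show ?thesis unfolding geq by simp
  qed
  have ggd: "g \<tau> * gd \<tau> = - (g \<tau>)\<^sup>2 * (2 * (L + L * (V \<tau>)\<^sup>2 * (exp (B \<tau>))\<^sup>2 / (H * (u \<tau>)\<^sup>2)) / (u \<tau>)\<^sup>2)" for \<tau>
    using upos[of \<tau>] H unfolding gd_def Bd_def Vd_def
    by (simp add: field_simps power2_eq_square)
  have ggd_nonpos: "g \<tau> * gd \<tau> \<le> 0" for \<tau>
  proof -
    have "0 \<le> 2 * (L + L * (V \<tau>)\<^sup>2 * (exp (B \<tau>))\<^sup>2 / (H * (u \<tau>)\<^sup>2)) / (u \<tau>)\<^sup>2"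
      using L H by (intro divide_nonneg_nonneg mult_nonneg_nonneg add_nonneg_nonneg) auto
    then have "0 \<le> (g \<tau>)\<^sup>2 * (2 * (L + L * (V \<tau>)\<^sup>2 * (exp (B \<tau>))\<^sup>2 / (H * (u \<tau>)\<^sup>2)) / (u \<tau>)\<^sup>2)"
      by (intro mult_nonneg_nonneg) auto
    then show "g \<tau> * gd \<tau> \<le> 0" unfolding ggd mult_minus_left by linarith
  qed
  have g2mono: "(g t)\<^sup>2 \<le> (g s)\<^sup>2" if "0 \<le> s" "s \<le> t" for s t
    by (rule mono_deriv'[where f="\<lambda>x. (g x)\<^sup>2" and f'="\<lambda>x. 2 * g x * gd x", OF that])
       (use that in \<open>auto intro!: derivative_eq_intros dg ggd_nonpos\<close>)
  have zp: "g t = 0" if "0 \<le> s" "s \<le> t" "g s = 0" for s t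
    using g2mono[OF that(1,2)] that(3) by simp
  have contg: "continuous_on {a..b} g" if "0 \<le> a" for a b
    by (rule cont_from_deriv[OF dg that])
  have gpos: "g \<tau> \<ge> 0" if h0: "g 0 \<ge> 0" and h1: "\<tau> \<ge> 0" for \<tau>
  proof (rule ccontr)
    assume "\<not> g \<tau> \<ge> 0"
    then obtain s where "0 \<le> s" "s \<le> \<tau>" "g s = 0"
      using IVT2'[of g \<tau> 0 0, OF _ h0 h1 contg] by force
    then show False using zp[of s \<tau>] \<open>\<not> g \<tau> \<ge> 0\<close> by simp
  qed
  have gneg: "g \<tau> \<le> 0" if h0: "g 0 \<le> 0" and h1: "\<tau> \<ge> 0" for \<tau>
  proof (rule ccontr)
    assume "\<not> g \<tau> \<le> 0"
    then obtain s where "0 \<le> s" "s \<le> \<tau>" "g s = 0"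
      using IVT'[of g 0 0 \<tau>, OF h0 _ h1 contg] by force
    then show False using zp[of s \<tau>] \<open>\<not> g \<tau> \<le> 0\<close> by simp
  qed
  have ul_pos: "L + exp x > 0" for x using L by (simp add: add_pos_pos)
  show ?thesis
  proof (cases "g 0 \<ge> 0")
    case True
    have gp: "g \<tau> \<ge> 0" if "\<tau> \<ge> 0" for \<tau> using gpos True that by auto
    have LVu: "L * V \<tau> \<ge> u \<tau>" if "\<tau> \<ge> 0" for \<tau>
    proof -
      from gp[OF that] have "L * V \<tau> / u \<tau> \<ge> 1" using g unfolding u_def by simp
      then show ?thesis using upos[of \<tau>] by (simp add: le_divide_eq)
    qed
    have Vgt: "V \<tau> > 1" if "\<tau> \<ge> 0" for \<tau>
    proof -
      have "u \<tau> > L" unfolding u_def by simp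
      then have "L * V \<tau> > L * 1" using LVu[OF that] by simp
      then show ?thesis using L by simp
    qed
    have Vmono: "V t \<le> V s" if "0 \<le> s" "s \<le> t" for s t
      by (rule mono_deriv'[OF that dV']) (use that gp upos in \<open>auto simp: Vd_def intro!: divide_nonneg_pos\<close>)
    have Bmono: "B s \<le> B t" if "0 \<le> s" "s \<le> t" for s t
    proof (rule mono_deriv[OF that])
      fix x assume "s \<le> x" "x \<le> t"
      then show "(B has_real_derivative Bd x) (at x within {0..})" using that dB' by simp
    next
      fix x assume "s \<le> x" "x \<le> t"
      then have x: "x \<ge> 0" using that by simp
      show "0 \<le> Bd x" unfolding Bd_def using gp[OF x] Vgt[OF x] H
        by (intro mult_nonneg_nonneg divide_nonneg_nonneg) auto
    qed
    have Bbd: "B t \<le> ln (L * V 0)" if "0 \<le> t" for t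
    proof -
      have "exp (B t) < u t" unfolding u_def using L by simp
      also have "u t \<le> L * V t" using LVu that by simp
      also have "L * V t \<le> L * V 0" using Vmono[of 0 t] that L by simp
      finally show ?thesis using L Vgt[of 0] by (subst ln_ge_iff) auto
    qed
    obtain bl where bl: "(B \<longlongrightarrow> bl) at_top" using mono_conv[of B] Bmono Bbd by blast
    obtain vl where vl: "(V \<longlongrightarrow> vl) at_top" using mono_conv'[of V 1] Vmono Vgt by force
    define gl where "gl = L * vl / (L + exp bl) - 1"
    have gl_lim: "(g \<longlongrightarrow> gl) at_top" unfolding geq u_def gl_def using ul_pos[of bl]
      by (intro tendsto_intros bl vl) auto
    have "gl \<ge> 0"
    proof (rule tendsto_lowerbound[OF gl_lim])
      show "\<forall>\<^sub>F i in at_top. 0 \<le> g i" using eventually_ge_at_top[of "0::real"] by eventually_elim (rule gp)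
    qed simp
    moreover have "\<not> gl > 0"
    proof
      assume glp: "gl > 0"
      define c where "c = gl / (L + exp bl)"
      have cpos: "c > 0" using glp ul_pos[of bl] by (simp add: c_def)
      have "(Vd \<longlongrightarrow> - 2 * gl / (L + exp bl)) at_top" unfolding Vd_def[abs_def] u_def using ul_pos[of bl]
        by (intro tendsto_intros gl_lim bl) auto
      moreover have "- 2 * gl / (L + exp bl) < - c" using cpos unfolding c_def by simp
      ultimately have "eventually (\<lambda>\<tau>. Vd \<tau> < - c) at_top" by (rule order_tendstoD)
      then obtain T0 where T0: "\<And>\<tau>. \<tau> \<ge> T0 \<Longrightarrow> Vd \<tau> < - c" by (auto simp: eventually_at_top_linorder)
      define T where "T = max T0 0"
      have W: "V t + c * t \<le> V T + c * T" if "T \<le> t" for t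
      proof (rule mono_deriv'[where f="\<lambda>x. V x + c * x" and f'="\<lambda>x. Vd x + c * 1"])
        show "0 \<le> T" by (simp add: T_def)
        show "T \<le> t" by fact
      next
        fix x assume "T \<le> x" "x \<le> t"
        then have x0: "x \<ge> 0" by (auto simp: T_def)
        show "((\<lambda>x. V x + c * x) has_real_derivative Vd x + c * 1) (at x within {0..})"
          by (auto intro!: derivative_eq_intros dV'[OF x0])
      next
        fix x assume "T \<le> x" "x \<le> t"
        then have x0: "x \<ge> T0" by (auto simp: T_def)
        show "Vd x + c * 1 \<le> 0" using T0[OF x0] by simp
      qed
      define t where "t = max T ((V T + c * T) / c)"
      have "V t + c * t \<le> V T + c * T" using W t_def by simp
      moreover have "c * t \<ge> V T + c * T"
      proof -
        have "c * t \<ge> c * ((V T + c * T) / c)" unfolding t_def using cpos by (intro mult_left_mono) auto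
        then show ?thesis using cpos by simp
      qed
      moreover have "V t > 1" using Vgt t_def T_def by simp
      ultimately show False by linarith
    qed
    ultimately have "gl = 0" by simp
    then have "L * vl = L + exp bl" using ul_pos[of bl] unfolding gl_def by (simp add: field_simps)
    then show ?thesis using bl vl by blast
  next
    case False
    have gn: "g \<tau> \<le> 0" if "\<tau> \<ge> 0" for \<tau> using gneg False that by auto
    have Vmono: "V s \<le> V t" if "0 \<le> s" "s \<le> t" for s t
      by (rule mono_deriv[OF that dV']) (use that gn upos in \<open>auto simp: Vd_def intro!: divide_nonpos_pos\<close>)
    have Vpos: "V \<tau> > 0" if "\<tau> \<ge> 0" for \<tau> using Vmono[of 0 \<tau>] V0 that by simp
    have Bmono: "B t \<le> B s" if "0 \<le> s" "s \<le> t" for s t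
    proof (rule mono_deriv'[OF that])
      fix x assume "s \<le> x" "x \<le> t"
      then show "(B has_real_derivative Bd x) (at x within {0..})" using that dB' by simp
    next
      fix x assume "s \<le> x" "x \<le> t"
      then have x: "x \<ge> 0" using that by simp
      have "2 * g x * (V x / H) \<le> 0"
        by (rule mult_nonpos_nonneg) (use gn[OF x] Vpos[OF x] H in auto)
      then show "Bd x \<le> 0" unfolding Bd_def
        by (rule mult_nonpos_nonneg) auto
    qed
    define M where "M = (L + exp (B 0)) / L"
    have LVu: "L * V \<tau> \<le> u \<tau>" if "\<tau> \<ge> 0" for \<tau>
    proof -
      from gn[OF that] have "L * V \<tau> / u \<tau> \<le> 1" using g unfolding u_def by simp
      then show ?thesis using upos[of \<tau>] by (simp add: divide_le_eq)
    qed
    have Vbd: "V \<tau> \<le> M" if "\<tau> \<ge> 0" for \<tau>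
    proof -
      have "exp (B \<tau>) \<le> exp (B 0)" using Bmono[of 0 \<tau>] that by simp
      then have "L * V \<tau> \<le> L + exp (B 0)" using LVu[OF that] unfolding u_def by linarith
      then show ?thesis unfolding M_def using L by (simp add: le_divide_eq mult.commute)
    qed
    have M0: "M \<ge> 0" using Vbd[of 0] V0 by simp
    have Wd: "Bd x + M / H * Vd x = (2 * g x / (H * u x)) * (V x * exp (B x) / u x - M)" for x
      unfolding Bd_def Vd_def by (rule algW) (use upos[of x] H in auto)
    have Wnn: "0 \<le> Bd x + M / H * Vd x" if "x \<ge> 0" for x
    proof -
      have "exp (B x) / u x \<le> 1" using upos[of x] L unfolding u_def by simp
      then have "V x * (exp (B x) / u x) \<le> V x * 1" using Vpos[OF that] by (intro mult_left_mono) auto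
      then have "V x * exp (B x) / u x - M \<le> 0" using Vbd[OF that] by simp
      moreover have "2 * g x / (H * u x) \<le> 0" using gn[OF that] H upos[of x] by (intro divide_nonpos_pos) auto
      ultimately show ?thesis unfolding Wd by (intro mult_nonpos_nonpos)
    qed
    have Wmono: "B s + M / H * V s \<le> B t + M / H * V t" if "0 \<le> s" "s \<le> t" for s t
    proof (rule mono_deriv[where f="\<lambda>x. B x + M / H * V x" and f'="\<lambda>x. Bd x + M / H * Vd x", OF that])
      fix x assume "s \<le> x" "x \<le> t"
      then have x0: "x \<ge> 0" using that by simp
      show "((\<lambda>x. B x + M / H * V x) has_real_derivative Bd x + M / H * Vd x) (at x within {0..})"
        by (intro derivative_intros DERIV_cmult dB'[OF x0] dV'[OF x0])
    next
      fix x assume "s \<le> x" "x \<le> t"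
      then have x0: "x \<ge> 0" using that by simp
      show "0 \<le> Bd x + M / H * Vd x" by (rule Wnn[OF x0])
    qed
    have Bbd: "B 0 + M / H * V 0 - M / H * M \<le> B t" if "0 \<le> t" for t
    proof -
      have "M / H * V t \<le> M / H * M" using Vbd[OF that] M0 H by (intro mult_left_mono) auto
      then show ?thesis using Wmono[of 0 t] that by simp
    qed
    obtain bl where bl: "(B \<longlongrightarrow> bl) at_top" using mono_conv'[of B] Bmono Bbd by blast
    obtain vl where vl: "(V \<longlongrightarrow> vl) at_top" using mono_conv[of V M] Vmono Vbd by force
    define gl where "gl = L * vl / (L + exp bl) - 1"
    have gl_lim: "(g \<longlongrightarrow> gl) at_top" unfolding geq u_def gl_def using ul_pos[of bl]
      by (intro tendsto_intros bl vl) auto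
    have "gl \<le> 0"
    proof (rule tendsto_upperbound[OF gl_lim])
      show "\<forall>\<^sub>F i in at_top. g i \<le> 0" using eventually_ge_at_top[of "0::real"] by eventually_elim (rule gn)
    qed simp
    moreover have "\<not> gl < 0"
    proof
      assume glp: "gl < 0"
      define c where "c = - gl / (L + exp bl)"
      have cpos: "c > 0" using glp ul_pos[of bl] by (simp add: c_def divide_neg_pos)
      have "(Vd \<longlongrightarrow> - 2 * gl / (L + exp bl)) at_top" unfolding Vd_def[abs_def] u_def using ul_pos[of bl]
        by (intro tendsto_intros gl_lim bl) auto
      moreover have "- 2 * gl / (L + exp bl) > c" using cpos unfolding c_def by simp
      ultimately have "eventually (\<lambda>\<tau>. Vd \<tau> > c) at_top" by (rule order_tendstoD)
      then obtain T0 where T0: "\<And>\<tau>. \<tau> \<ge> T0 \<Longrightarrow> Vd \<tau> > c" by (auto simp: eventually_at_top_linorder)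
      define T where "T = max T0 0"
      have W: "V T - c * T \<le> V t - c * t" if "T \<le> t" for t
      proof (rule mono_deriv[where f="\<lambda>x. V x - c * x" and f'="\<lambda>x. Vd x - c * 1"])
        show "0 \<le> T" by (simp add: T_def)
        show "T \<le> t" by fact
      next
        fix x assume "T \<le> x" "x \<le> t"
        then have x0: "x \<ge> 0" by (auto simp: T_def)
        show "((\<lambda>x. V x - c * x) has_real_derivative Vd x - c * 1) (at x within {0..})"
          by (auto intro!: derivative_eq_intros dV'[OF x0])
      next
        fix x assume "T \<le> x" "x \<le> t"
        then have x0: "x \<ge> T0" by (auto simp: T_def)
        show "0 \<le> Vd x - c * 1" using T0[OF x0] by simp
      qed
      define t where "t = max T ((M + 1 - V T + c * T) / c)"
      have "V T - c * T \<le> V t - c * t" using W t_def by simp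
      moreover have "c * t \<ge> M + 1 - V T + c * T"
      proof -
        have "c * t \<ge> c * ((M + 1 - V T + c * T) / c)" unfolding t_def using cpos by (intro mult_left_mono) auto
        then show ?thesis using cpos by simp
      qed
      moreover have "V t \<le> M" using Vbd t_def T_def by simp
      ultimately show False by linarith
    qed
    ultimately have "gl = 0" by simp
    then have "L * vl = L + exp bl" using ul_pos[of bl] unfolding gl_def by (simp add: field_simps)
    then show ?thesis using bl vl by blast
  qed
qed


lemma derivV:
  assumes "L \<ge> 1" "H \<ge> 1" "prob_space P"
  shows "((\<lambda>w. E0 L H F P (\<lambda>_. bt) w) has_real_derivative
               (2 * (real L * v / (real L + exp bt) - 1) * (1 / (real L + exp bt)))) (at v)"
proof -
  define u where "u = real L + exp bt"
  have upos: "u > 0" unfolding u_def by (intro add_nonneg_pos) auto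
  have eq: "(\<lambda>w. E0 L H F P (\<lambda>_. bt) w) = (\<lambda>w. 1 - 2 * (w / u) + real L * (w / u)\<^sup>2)"
    using assms by (simp add: E0_closed Af_const u_def)
  define G where "G = (\<lambda>w::real. w / u)"
  have dG: "(G has_real_derivative 1 / u) (at v)" unfolding G_def by (rule DERIV_cdivide[OF DERIV_ident])
  have d: "((\<lambda>w. 1 - 2 * G w + real L * (G w)\<^sup>2) has_real_derivative
       (- 2 * (1 / u) + real L * (2 * G v * (1 / u)))) (at v)"
    by (rule derivative_eq_intros dG refl | simp)+
  have eq2: "(\<lambda>w. E0 L H F P (\<lambda>_. bt) w) = (\<lambda>w. 1 - 2 * G w + real L * (G w)\<^sup>2)"
    unfolding eq G_def ..
  show ?thesis unfolding eq2 u_def[symmetric]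
    by (rule DERIV_cong[OF d]) (simp add: G_def algebra_simps)
qed

lemma alg_v: "- (2 * (X::real) * (1 / U)) = - 2 * X / U"
  by simp

theorem lemma6:
  fixes L H F :: nat and P :: "(nat \<Rightarrow> real) measure"
  assumes "L \<ge> 1" and "H \<ge> 1" and "F \<ge> 1"
    and "prob_space P" and "sets P = sets (PiM {1..F} (\<lambda>_. borel))"
  shows "(\<forall>bt v. \<forall>h\<in>{1..H}.
            ((\<lambda>t. E0 L H F P ((\<lambda>_. bt)(h := t)) v) has_real_derivative
               (- 2 * (real L * v / (real L + exp bt) - 1) * (v / real H)
                  * (exp bt / (real L + exp bt)\<^sup>2))) (at bt))
       \<and> (\<forall>bt v. ((\<lambda>w. E0 L H F P (\<lambda>_. bt) w) has_real_derivative
               (2 * (real L * v / (real L + exp bt) - 1) * (1 / (real L + exp bt)))) (at v))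
       \<and> (\<forall>bt v. rfixed L H F P bt v \<longleftrightarrow> real L * v = real L + exp bt)
       \<and> (\<forall>bt v. rfixed L H F P bt v \<longrightarrow> rattractive L H F P bt v)
       \<and> (\<forall>h\<in>{1..H}. pd_b L H F P h (\<lambda>_. 0) 1 > 0)
       \<and> pd_v L H F P (\<lambda>_. 0) 1 < 0"
proof -
  have D1: "((\<lambda>t. E0 L H F P ((\<lambda>_. bt)(h := t)) v) has_real_derivative
               (- 2 * (real L * v / (real L + exp bt) - 1) * (v / real H)
                  * (exp bt / (real L + exp bt)\<^sup>2))) (at bt)" if "h \<in> {1..H}" for bt v h
    by (rule derivB[OF assms(1,2,4) that])
  have D2: "((\<lambda>w. E0 L H F P (\<lambda>_. bt) w) has_real_derivative
               (2 * (real L * v / (real L + exp bt) - 1) * (1 / (real L + exp bt)))) (at v)" for bt v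
    by (rule derivV[OF assms(1,2,4)])
  have pdb: "pd_b L H F P h (\<lambda>_. bt) v = - 2 * (real L * v / (real L + exp bt) - 1) * (v / real H)
                  * (exp bt / (real L + exp bt)\<^sup>2)" if "h \<in> {1..H}" for bt v h
    unfolding pd_b_def using DERIV_imp_deriv[OF D1[OF that]] by simp
  have pdv: "pd_v L H F P (\<lambda>_. bt) v = 2 * (real L * v / (real L + exp bt) - 1) * (1 / (real L + exp bt))" for bt v
    unfolding pd_v_def using DERIV_imp_deriv[OF D2] by simp
  have h1: "(1::nat) \<in> {1..H}" using assms(2) by simp
  have upos: "real L + exp x > 0" for x by (intro add_nonneg_pos) auto
  have Hpos: "real H > 0" using assms(2) by simp
  have Lpos: "real L > 0" using assms(1) by simp
  have fixp: "rfixed L H F P bt v \<longleftrightarrow> real L * v = real L + exp bt" for bt v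
  proof -
    have un: "real L + exp bt \<noteq> 0" using upos[of bt] by simp
    have a: "pd_v L H F P (\<lambda>_. bt) v = 0 \<longleftrightarrow> real L * v / (real L + exp bt) - 1 = 0"
      unfolding pdv using un by (simp only: mult_eq_0_iff divide_eq_0_iff) simp
    have b: "real L * v / (real L + exp bt) - 1 = 0 \<Longrightarrow> pd_b L H F P 1 (\<lambda>_. bt) v = 0"
      unfolding pdb[OF h1] by simp
    have "rfixed L H F P bt v \<longleftrightarrow> real L * v / (real L + exp bt) - 1 = 0"
      unfolding rfixed_def using a b by blast
    also have "\<dots> \<longleftrightarrow> real L * v = real L + exp bt" using un by (auto simp: field_simps)
    finally show ?thesis .
  qed
  have attr: "rattractive L H F P bt v" if fx: "rfixed L H F P bt v" for bt v
    unfolding rattractive_def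
  proof (rule exI[of _ 1], intro conjI allI impI)
    fix B V assume sol: "rsolution L H F P B V \<and> dist (B 0, V 0) (bt, v) < 1"
    define g where "g \<tau> = real L * V \<tau> / (real L + exp (B \<tau>)) - 1" for \<tau>
    have dB: "(B has_real_derivative 2 * g \<tau> * (V \<tau> / real H) * (exp (B \<tau>) / (real L + exp (B \<tau>))\<^sup>2)) (at \<tau> within {0..})"
      if "\<tau> \<ge> 0" for \<tau>
    proof -
      have r: "(B has_real_derivative - pd_b L H F P 1 (\<lambda>_. B \<tau>) (V \<tau>)) (at \<tau> within {0..})"
        using sol that unfolding rsolution_def by blast
      show ?thesis by (rule DERIV_cong[OF r]) (unfold pdb[OF h1] g_def, simp add: algebra_simps)
    qed
    have dV: "(V has_real_derivative - 2 * g \<tau> / (real L + exp (B \<tau>))) (at \<tau> within {0..})"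
      if "\<tau> \<ge> 0" for \<tau>
    proof -
      have r: "(V has_real_derivative - pd_v L H F P (\<lambda>_. B \<tau>) (V \<tau>)) (at \<tau> within {0..})"
        using sol that unfolding rsolution_def by blast
      show ?thesis by (rule DERIV_cong[OF r]) (unfold pdv g_def alg_v, rule refl)
    qed
    have "dist (V 0) v < 1" using sol dist_snd_le[of "(B 0, V 0)" "(bt, v)"] by simp
    moreover have "real L * v > real L" using fixp fx by simp
    then have "v > 1" using Lpos by simp
    ultimately have V0: "V 0 > 0" by (simp add: dist_real_def abs_less_iff)
    obtain bl vl where lim: "real L * vl = real L + exp bl" "(B \<longlongrightarrow> bl) at_top" "(V \<longlongrightarrow> vl) at_top"
      using ode_conv[OF Lpos Hpos g_def dB dV V0] by blast
    then show "\<exists>b_lim v_lim. rfixed L H F P b_lim v_lim \<and> (B \<longlongrightarrow> b_lim) at_top \<and> (V \<longlongrightarrow> v_lim) at_top"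
      using fixp by blast
  qed simp
  have neg: "real L / (real L + 1) - 1 < 0" using Lpos by simp
  have p5: "pd_b L H F P h (\<lambda>_. 0) 1 > 0" if "h \<in> {1..H}" for h
  proof -
    have "0 < - 2 * (real L / (real L + 1) - 1) * (1 / real H) * (1 / (real L + 1)\<^sup>2)"
    proof -
      have a1: "0 < - 2 * (real L / (real L + 1) - 1)" by (rule mult_neg_neg[OF _ neg]) simp
      have a2: "0 < 1 / real H" using Hpos by simp
      have a3: "0 < 1 / (real L + 1)\<^sup>2" using Lpos by simp
      show ?thesis by (rule mult_pos_pos[OF mult_pos_pos[OF a1 a2] a3])
    qed
    then show ?thesis unfolding pdb[OF that] by simp
  qed
  have p6: "pd_v L H F P (\<lambda>_. 0) 1 < 0"
  proof -
    have "2 * (real L / (real L + 1) - 1) * (1 / (real L + 1)) < 0"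
    proof -
      have a1: "2 * (real L / (real L + 1) - 1) < 0" by (rule mult_pos_neg[OF _ neg]) simp
      have a3: "0 < 1 / (real L + 1)" using Lpos by simp
      show ?thesis by (rule mult_neg_pos[OF a1 a3])
    qed
    then show ?thesis unfolding pdv by simp
  qed
  show ?thesis using D1 D2 fixp attr p5 p6 by blast
qed

end
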